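(* Let $\mathcal{C}$ be a monopole and $x$ an object of $\mathcal{C}$. If $\mu_x:x\to y$ is a completion of $x$ in $\mathcal{C}$, then $y$ is complete in $\mathcal{C}$, i.e. $1_y:y\to y$ is a completion of $y$ in $\mathcal{C}$.
   Context: A refinement of a category is a subcategory containing all objects and all isomorphisms. A (positive) monopole is a category $\mathcal{C}$ with a distinguished refinement $\mathcal{C}_+$ whose arrows are called positive. For an object $x$, the co-slice $x\downarrow\mathcal{C}$ is the category whose objects are the positive arrows $f:x\to a$, with morphisms from $f:x\to a$ to $g:x\to b$ the arrows $\xi:a\to b$ of $\mathcal{C}$ with $\xi\circ f=g$. An object $z$ of a category is amphi-terminal if every object has at least one arrow to $z$ and $z$ has at most one arrow to any object. A completion of $x$ in $\mathcal{C}$ is an amphi-terminal object of $x\downarrow\mathcal{C}$; $x$ is complete in $\mathcal{C}$ if $1_x$ is a completion of $x$. *)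

theory Defs
  imports Main
begin

text \<open>A (small) category given explicitly: objects, arrows, domain, codomain,
  identities and composition. cComp C g f denotes g composed after f.\<close>
record ('o, 'a) cat =
  cObj  :: "'o set"
  cArr  :: "'a set"
  cDom  :: "'a \<Rightarrow> 'o"
  cCod  :: "'a \<Rightarrow> 'o"
  cId   :: "'o \<Rightarrow> 'a"
  cComp :: "'a \<Rightarrow> 'a \<Rightarrow> 'a"

definition category :: "('o, 'a) cat \<Rightarrow> bool" where
  "category C \<longleftrightarrow>
     (\<forall>f\<in>cArr C. cDom C f \<in> cObj C \<and> cCod C f \<in> cObj C) \<and>
     (\<forall>x\<in>cObj C. cId C x \<in> cArr C \<and> cDom C (cId C x) = x \<and> cCod C (cId C x) = x) \<and>
     (\<forall>f\<in>cArr C. \<forall>g\<in>cArr C. cCod C f = cDom C g \<longrightarrow>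
        cComp C g f \<in> cArr C \<and> cDom C (cComp C g f) = cDom C f \<and> cCod C (cComp C g f) = cCod C g) \<and>
     (\<forall>f\<in>cArr C. cComp C (cId C (cCod C f)) f = f \<and> cComp C f (cId C (cDom C f)) = f) \<and>
     (\<forall>f\<in>cArr C. \<forall>g\<in>cArr C. \<forall>h\<in>cArr C. cCod C f = cDom C g \<longrightarrow> cCod C g = cDom C h \<longrightarrow>
        cComp C h (cComp C g f) = cComp C (cComp C h g) f)"

definition iso :: "('o, 'a) cat \<Rightarrow> 'a \<Rightarrow> bool" where
  "iso C f \<longleftrightarrow> f \<in> cArr C \<and>
     (\<exists>g\<in>cArr C. cDom C g = cCod C f \<and> cCod C g = cDom C f \<and>
        cComp C g f = cId C (cDom C f) \<and> cComp C f g = cId C (cCod C f))"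

text \<open>A refinement: a subcategory (given by its set of arrows P) containing
  all objects (i.e. their identities) and all isomorphisms.\<close>
definition refinement :: "('o, 'a) cat \<Rightarrow> 'a set \<Rightarrow> bool" where
  "refinement C P \<longleftrightarrow> P \<subseteq> cArr C \<and>
     (\<forall>x\<in>cObj C. cId C x \<in> P) \<and>
     (\<forall>f\<in>P. \<forall>g\<in>P. cCod C f = cDom C g \<longrightarrow> cComp C g f \<in> P) \<and>
     (\<forall>f. iso C f \<longrightarrow> f \<in> P)"

definition monopole :: "('o, 'a) cat \<Rightarrow> 'a set \<Rightarrow> bool" where
  "monopole C P \<longleftrightarrow> category C \<and> refinement C P"

definition coslice :: "('o, 'a) cat \<Rightarrow> 'a set \<Rightarrow> 'o \<Rightarrow> ('a, 'a \<times> 'a \<times> 'a) cat" where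
  "coslice C P x = \<lparr>
     cObj = {f \<in> P. cDom C f = x},
     cArr = {(f, \<xi>, g). f \<in> P \<and> cDom C f = x \<and> g \<in> P \<and> cDom C g = x \<and>
               \<xi> \<in> cArr C \<and> cDom C \<xi> = cCod C f \<and> cCod C \<xi> = cCod C g \<and> cComp C \<xi> f = g},
     cDom = (\<lambda>(f, \<xi>, g). f),
     cCod = (\<lambda>(f, \<xi>, g). g),
     cId = (\<lambda>f. (f, cId C (cCod C f), f)),
     cComp = (\<lambda>(g, \<eta>, h) (f, \<xi>, g'). (f, cComp C \<eta> \<xi>, h)) \<rparr>"

definition amphi_terminal :: "('o, 'a) cat \<Rightarrow> 'o \<Rightarrow> bool" where
  "amphi_terminal D z \<longleftrightarrow> z \<in> cObj D \<and>
     (\<forall>a\<in>cObj D. \<exists>h\<in>cArr D. cDom D h = a \<and> cCod D h = z) \<and>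
     (\<forall>a\<in>cObj D. \<forall>h\<in>cArr D. \<forall>h'\<in>cArr D.
        cDom D h = z \<and> cCod D h = a \<and> cDom D h' = z \<and> cCod D h' = a \<longrightarrow> h = h')"

definition completion :: "('o, 'a) cat \<Rightarrow> 'a set \<Rightarrow> 'o \<Rightarrow> 'a \<Rightarrow> bool" where
  "completion C P x f \<longleftrightarrow> amphi_terminal (coslice C P x) f"

definition complete :: "('o, 'a) cat \<Rightarrow> 'a set \<Rightarrow> 'o \<Rightarrow> bool" where
  "complete C P x \<longleftrightarrow> completion C P x (cId C x)"

end

theory Submission
  imports Defs
begin

lemma cs_obj: "cObj (coslice C P x) = {f \<in> P. cDom C f = x}" by (simp add: coslice_def)
lemma cs_arr: "(f, \<xi>, g) \<in> cArr (coslice C P x) \<longleftrightarrow> f \<in> P \<and> cDom C f = x \<and> g \<in> P \<and> cDom C g = x \<and>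
               \<xi> \<in> cArr C \<and> cDom C \<xi> = cCod C f \<and> cCod C \<xi> = cCod C g \<and> cComp C \<xi> f = g"
  by (simp add: coslice_def)
lemma cs_dom: "cDom (coslice C P x) (f, \<xi>, g) = f" by (simp add: coslice_def)
lemma cs_cod: "cCod (coslice C P x) (f, \<xi>, g) = g" by (simp add: coslice_def)

theorem mainTheorem4:
  fixes C :: "('o, 'a) cat" and P :: "'a set" and x y :: 'o and \<mu> :: 'a
  assumes "monopole C P"
    and "x \<in> cObj C"
    and "completion C P x \<mu>"
    and "cCod C \<mu> = y"
  shows "complete C P y"
proof -
  have cat: "category C" and ref: "refinement C P" using assms(1) by (auto simp: monopole_def)
  have cdc: "\<And>f. f \<in> cArr C \<Longrightarrow> cDom C f \<in> cObj C \<and> cCod C f \<in> cObj C"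
    using cat unfolding category_def by blast
  have cid: "\<And>x. x \<in> cObj C \<Longrightarrow> cId C x \<in> cArr C \<and> cDom C (cId C x) = x \<and> cCod C (cId C x) = x"
    using cat unfolding category_def by blast
  have ccomp: "\<And>f g. f \<in> cArr C \<Longrightarrow> g \<in> cArr C \<Longrightarrow> cCod C f = cDom C g \<Longrightarrow>
        cComp C g f \<in> cArr C \<and> cDom C (cComp C g f) = cDom C f \<and> cCod C (cComp C g f) = cCod C g"
    using cat unfolding category_def by blast
  have cunit: "\<And>f. f \<in> cArr C \<Longrightarrow> cComp C (cId C (cCod C f)) f = f \<and> cComp C f (cId C (cDom C f)) = f"
    using cat unfolding category_def by blast
  have cassoc: "\<And>f g h. f \<in> cArr C \<Longrightarrow> g \<in> cArr C \<Longrightarrow> h \<in> cArr C \<Longrightarrow> cCod C f = cDom C g \<Longrightarrow> cCod C g = cDom C h \<Longrightarrow>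
        cComp C h (cComp C g f) = cComp C (cComp C h g) f"
    using cat unfolding category_def by blast
  have PA: "P \<subseteq> cArr C" and Pid: "\<And>x. x \<in> cObj C \<Longrightarrow> cId C x \<in> P"
    and Pcomp: "\<And>f g. f \<in> P \<Longrightarrow> g \<in> P \<Longrightarrow> cCod C f = cDom C g \<Longrightarrow> cComp C g f \<in> P"
    using ref unfolding refinement_def by blast+
  have at: "amphi_terminal (coslice C P x) \<mu>" using assms(3) by (simp add: completion_def)
  have muO: "\<mu> \<in> cObj (coslice C P x)" using at by (simp add: amphi_terminal_def)
  have toMu: "\<And>a. a \<in> cObj (coslice C P x) \<Longrightarrow> \<exists>h\<in>cArr (coslice C P x). cDom (coslice C P x) h = a \<and> cCod (coslice C P x) h = \<mu>"
    using at unfolding amphi_terminal_def by blast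
  have uniq: "\<And>a h h'. a \<in> cObj (coslice C P x) \<Longrightarrow> h \<in> cArr (coslice C P x) \<Longrightarrow> h' \<in> cArr (coslice C P x) \<Longrightarrow>
        cDom (coslice C P x) h = \<mu> \<Longrightarrow> cCod (coslice C P x) h = a \<Longrightarrow> cDom (coslice C P x) h' = \<mu> \<Longrightarrow> cCod (coslice C P x) h' = a \<Longrightarrow> h = h'"
    using at unfolding amphi_terminal_def by blast
  have muP: "\<mu> \<in> P" and mud: "cDom C \<mu> = x" using muO by (auto simp: cs_obj)
  have muA: "\<mu> \<in> cArr C" using muP PA by auto
  have yO: "y \<in> cObj C" using muA cdc assms(4) by auto
  have idP: "cId C y \<in> P" using yO Pid by auto
  have idA: "cId C y \<in> cArr C" and idd: "cDom C (cId C y) = y" and idc: "cCod C (cId C y) = y"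
    using yO cid by auto
  have ex: "\<exists>\<xi>. \<xi> \<in> cArr C \<and> cDom C \<xi> = cCod C f \<and> cCod C \<xi> = y \<and> cComp C \<xi> f = cId C y"
    if fP: "f \<in> P" and fd: "cDom C f = y" for f
  proof -
    have fA: "f \<in> cArr C" using fP PA by auto
    define g where "g = cComp C f \<mu>"
    have gP: "g \<in> P" using Pcomp fP muP fd assms(4) g_def by auto
    have gA: "g \<in> cArr C" and gd: "cDom C g = x" and gc: "cCod C g = cCod C f"
      using ccomp[OF muA fA] fd assms(4) mud g_def by auto
    have "g \<in> cObj (coslice C P x)" using gP gd by (simp add: cs_obj)
    then obtain h where hA: "h \<in> cArr (coslice C P x)" and hd: "cDom (coslice C P x) h = g"
       and hc: "cCod (coslice C P x) h = \<mu>" using toMu by blast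
    obtain a \<xi> b where hh: "h = (a, \<xi>, b)" by (cases h) auto
    have xA: "\<xi> \<in> cArr C" and xd: "cDom C \<xi> = cCod C f" and xc: "cCod C \<xi> = y"
      and xe: "cComp C \<xi> g = \<mu>"
      using hA hd hc gc assms(4) unfolding hh cs_arr cs_dom cs_cod by auto
    have cA: "cComp C \<xi> f \<in> cArr C" and cd: "cDom C (cComp C \<xi> f) = y"
      and cc: "cCod C (cComp C \<xi> f) = y"
      using ccomp[OF fA xA] xd fd xc by auto
    have ce: "cComp C (cComp C \<xi> f) \<mu> = \<mu>"
      using cassoc[OF muA fA xA] xd fd assms(4) xe g_def by simp
    have ie: "cComp C (cId C y) \<mu> = \<mu>" using cunit[OF muA] assms(4) by auto
    have "(\<mu>, cComp C \<xi> f, \<mu>) = (\<mu>, cId C y, \<mu>)"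
      apply (rule uniq[OF muO])
      using muP mud cA cd cc ce idA idd idc ie assms(4) by (auto simp: cs_arr cs_dom cs_cod)
    thus ?thesis using xA xd xc by auto
  qed
  have "amphi_terminal (coslice C P y) (cId C y)"
    unfolding amphi_terminal_def
  proof (intro conjI ballI impI)
    show "cId C y \<in> cObj (coslice C P y)" using idP idd by (simp add: cs_obj)
  next
    fix a assume "a \<in> cObj (coslice C P y)"
    hence aP: "a \<in> P" and ad: "cDom C a = y" by (auto simp: cs_obj)
    then obtain \<xi> where "\<xi> \<in> cArr C \<and> cDom C \<xi> = cCod C a \<and> cCod C \<xi> = y \<and> cComp C \<xi> a = cId C y"
      using ex by blast
    hence "(a, \<xi>, cId C y) \<in> cArr (coslice C P y)" using aP ad idP idd idc by (simp add: cs_arr)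
    thus "\<exists>h\<in>cArr (coslice C P y). cDom (coslice C P y) h = a \<and> cCod (coslice C P y) h = cId C y"
      by (intro bexI[where x="(a, \<xi>, cId C y)"]) (auto simp: cs_dom cs_cod)
  next
    fix a h h'
    assume h: "h \<in> cArr (coslice C P y)" and h': "h' \<in> cArr (coslice C P y)"
      and e: "cDom (coslice C P y) h = cId C y \<and> cCod (coslice C P y) h = a \<and>
        cDom (coslice C P y) h' = cId C y \<and> cCod (coslice C P y) h' = a"
    obtain a1 \<xi> b1 where hh: "h = (a1, \<xi>, b1)" by (cases h) auto
    obtain a2 \<xi>' b2 where hh': "h' = (a2, \<xi>', b2)" by (cases h') auto
    have 1: "a1 = cId C y" "b1 = a" "a2 = cId C y" "b2 = a" using e hh hh' by (auto simp: cs_dom cs_cod)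
    have 2: "\<xi> \<in> cArr C" "cDom C \<xi> = y" "cComp C \<xi> (cId C y) = a"
      using h unfolding hh 1 cs_arr using idc by auto
    have 3: "\<xi>' \<in> cArr C" "cDom C \<xi>' = y" "cComp C \<xi>' (cId C y) = a"
      using h' unfolding hh' 1 cs_arr using idc by auto
    have "\<xi> = a" using cunit[OF 2(1)] 2 by simp
    moreover have "\<xi>' = a" using cunit[OF 3(1)] 3 by simp
    ultimately show "h = h'" using hh hh' 1 by simp
  qed
  thus ?thesis by (simp add: complete_def completion_def)
qed

end
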